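(* Let $(B,\lfloor\cdot,\cdot\rfloor)$ be an SSD space with associated quadratic form $q$, and let $A\subset B$ be a maximally $q$-positive set which is convex. Then $A$ is an affine subset of $B$.
   Context: An SSD (symmetrically self-dual) space is a pair $(B,\lfloor\cdot,\cdot\rfloor)$ where $B$ is a nonzero real vector space and $\lfloor\cdot,\cdot\rfloor:B\times B\to\mathbb{R}$ is a symmetric bilinear form; its quadratic form is $q(b)=\frac12\lfloor b,b\rfloor$. A nonempty set $A\subset B$ is $q$-positive if $q(b-c)\ge 0$ for all $b,c\in A$. A set is maximally $q$-positive if it is $q$-positive and not properly contained in any other $q$-positive set. *)

theory Defs
  imports "HOL-Analysis.Analysis"
begin

definition SSD_space :: "('a::real_vector \<Rightarrow> 'a \<Rightarrow> real) \<Rightarrow> bool" where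
  "SSD_space br \<longleftrightarrow> (\<exists>x::'a. x \<noteq> 0) \<and> bilinear br \<and> (\<forall>b c. br b c = br c b)"

definition ssd_q :: "('a::real_vector \<Rightarrow> 'a \<Rightarrow> real) \<Rightarrow> 'a \<Rightarrow> real" where
  "ssd_q br b = (1/2) * br b b"

definition q_positive :: "('a::real_vector \<Rightarrow> 'a \<Rightarrow> real) \<Rightarrow> 'a set \<Rightarrow> bool" where
  "q_positive br A \<longleftrightarrow> A \<noteq> {} \<and> (\<forall>b\<in>A. \<forall>c\<in>A. ssd_q br (b - c) \<ge> 0)"

definition maximally_q_positive :: "('a::real_vector \<Rightarrow> 'a \<Rightarrow> real) \<Rightarrow> 'a set \<Rightarrow> bool" where
  "maximally_q_positive br A \<longleftrightarrow> q_positive br A \<and>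
     (\<forall>A'. q_positive br A' \<and> A \<subseteq> A' \<longrightarrow> A' = A)"

end

theory Submission
  imports Defs
begin

lemma q_scale:
  assumes "bilinear br"
  shows "ssd_q br (m *\<^sub>R w) = m^2 * ssd_q br w"
proof -
  have l1: "linear (\<lambda>y. br x y)" for x using assms unfolding bilinear_def by blast
  have l2: "linear (\<lambda>x. br x y)" for y using assms unfolding bilinear_def by blast
  have "br (m *\<^sub>R w) (m *\<^sub>R w) = m * br w (m *\<^sub>R w)"
    using linear_scale[OF l2] by simp
  also have "\<dots> = m * (m * br w w)" using linear_scale[OF l1] by simp
  finally show ?thesis unfolding ssd_q_def by (simp add: power2_eq_square)
qed

lemma key:
  assumes bl: "bilinear br" and qp: "\<forall>b\<in>A. \<forall>c\<in>A. ssd_q br (b - c) \<ge> 0"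
    and cv: "convex A" and a: "a \<in> A" and b: "b \<in> A" and c: "c \<in> A" and uv: "u + v = 1"
  shows "ssd_q br (u *\<^sub>R a + v *\<^sub>R b - c) \<ge> 0"
proof -
  consider "u \<le> 0" | "v \<le> 0" | "0 \<le> u \<and> 0 \<le> v" by linarith
  then show ?thesis
  proof cases
    case 1
    hence vp: "v \<ge> 1" using uv by simp
    define p where "p = (-u/v) *\<^sub>R a + (1/v) *\<^sub>R c"
    have "p \<in> A" unfolding p_def
      by (rule convexD[OF cv a c]) (use 1 vp uv in \<open>auto simp: field_simps\<close>)
    have e: "u *\<^sub>R a + v *\<^sub>R b - c = v *\<^sub>R (b - p)"
      using vp unfolding p_def by (simp add: algebra_simps)
    show ?thesis unfolding e q_scale[OF bl] using qp b \<open>p \<in> A\<close> by simp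
  next
    case 2
    hence up: "u \<ge> 1" using uv by simp
    define p where "p = (-v/u) *\<^sub>R b + (1/u) *\<^sub>R c"
    have "p \<in> A" unfolding p_def
      by (rule convexD[OF cv b c]) (use 2 up uv in \<open>auto simp: field_simps\<close>)
    have e: "u *\<^sub>R a + v *\<^sub>R b - c = u *\<^sub>R (a - p)"
      using up unfolding p_def by (simp add: algebra_simps)
    show ?thesis unfolding e q_scale[OF bl] using qp a \<open>p \<in> A\<close> by simp
  next
    case 3
    have "u *\<^sub>R a + v *\<^sub>R b \<in> A" using convexD[OF cv a b] 3 uv by simp
    then show ?thesis using qp c by simp
  qed
qed

theorem mainTheorem1:
  fixes br :: "'a::real_vector \<Rightarrow> 'a \<Rightarrow> real" and A :: "'a set"
  assumes "SSD_space br"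
    and "maximally_q_positive br A"
    and "convex A"
  shows "affine A"
proof -
  have bl: "bilinear br" using assms(1) unfolding SSD_space_def by blast
  have qpA: "q_positive br A" and mx: "\<And>A'. q_positive br A' \<Longrightarrow> A \<subseteq> A' \<Longrightarrow> A' = A"
    using assms(2) unfolding maximally_q_positive_def by blast+
  have qp: "\<forall>b\<in>A. \<forall>c\<in>A. ssd_q br (b - c) \<ge> 0" using qpA unfolding q_positive_def by blast
  show ?thesis unfolding affine_def
  proof (intro ballI allI impI)
    fix a b u v assume a: "a \<in> A" and b: "b \<in> A" and uv: "u + v = (1::real)"
    define x where "x = u *\<^sub>R a + v *\<^sub>R b"
    have k: "ssd_q br (x - c) \<ge> 0" if "c \<in> A" for c
      unfolding x_def by (rule key[OF bl qp assms(3) a b that uv])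
    have k2: "ssd_q br (c - x) \<ge> 0" if "c \<in> A" for c
    proof -
      have "c - x = (-1) *\<^sub>R (x - c)" by simp
      then show ?thesis using k[OF that] q_scale[OF bl, of "-1" "x - c"] by simp
    qed
    have z: "ssd_q br 0 = 0" using q_scale[OF bl, of 0 0] by simp
    have "q_positive br (insert x A)"
      unfolding q_positive_def using qp k k2 z by auto
    hence "insert x A = A" using mx by blast
    thus "u *\<^sub>R a + v *\<^sub>R b \<in> A" unfolding x_def by blast
  qed
qed

end
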